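(* Let $m,\ell$ be positive integers and $r$ an integer. (a) If $r\in[2,2^m)$, then $\rho(t)\le 2^{m-t}$ for every positive integer $t$. (b) If $r\in[2^{m-1},2^m)$ with $r\ge2$, then $\rho(t)\le\min(2^{m-t},\,2^{t+3-m})$ for every positive integer $t$.
   Context: For integers $u$ and $N\ge1$, $\{u\}_N$ denotes the residue of $u$ modulo $N$ in $[-N/2,N/2)$. Let $\beta=2^{m+\ell}\bmod r$, $L=\lfloor2^{m+\ell}/r\rfloor$, and for an integer $j$ let $\alpha_r(j)=\{rj\}_{2^{m+\ell}}$. The probability of a frequency $j\in\{0,\dots,2^{m+\ell}-1\}$ is $$\frac{\beta}{2^{2(m+\ell)}}\Bigl|\sum_{b=0}^{L}e^{i\theta b}\Bigr|^2+\frac{r-\beta}{2^{2(m+\ell)}}\Bigl|\sum_{b=0}^{L-1}e^{i\theta b}\Bigr|^2,\qquad \theta=2\pi\alpha_r(j)/2^{m+\ell}.$$ For a positive integer $t$, $\rho(t)$ is the total probability of those $j\in\{0,\dots,2^{m+\ell}-1\}$ with $|\alpha_r(j)|\in[2^{t-1},2^t)$. *)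

theory Defs
  imports "HOL-Analysis.Analysis"
begin

definition cres :: "int \<Rightarrow> int \<Rightarrow> int" where
  "cres u N = (u + N div 2) mod N - N div 2"

definition alpha_r :: "nat \<Rightarrow> nat \<Rightarrow> int \<Rightarrow> int \<Rightarrow> int" where
  "alpha_r m l r j = cres (r * j) (2 ^ (m + l))"

definition freq_prob :: "nat \<Rightarrow> nat \<Rightarrow> int \<Rightarrow> int \<Rightarrow> real" where
  "freq_prob m l r j =
    (let N = (2::int) ^ (m + l);
         \<beta> = N mod r;
         L = nat (N div r);
         \<theta> = 2 * pi * real_of_int (alpha_r m l r j) / real_of_int N
     in real_of_int \<beta> / real_of_int N ^ 2 * (cmod (\<Sum>b\<le>L. cis (\<theta> * real b)))\<^sup>2
        + real_of_int (r - \<beta>) / real_of_int N ^ 2 * (cmod (\<Sum>b<L. cis (\<theta> * real b)))\<^sup>2)"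

definition rho :: "nat \<Rightarrow> nat \<Rightarrow> int \<Rightarrow> nat \<Rightarrow> real" where
  "rho m l r t = (\<Sum>j\<in>{j\<in>{0..<(2::int) ^ (m + l)}.
       2 ^ (t - 1) \<le> \<bar>alpha_r m l r j\<bar> \<and> \<bar>alpha_r m l r j\<bar> < 2 ^ t}. freq_prob m l r j)"

end

theory Submission imports Defs "HOL-Computational_Algebra.Primes" begin

lemma cres_range:
  fixes N :: int assumes "0 < N" "even N"
  shows "- (N div 2) \<le> cres u N" "cres u N < N div 2"
  using assms unfolding cres_def
  by (auto simp: pos_mod_bound)

lemma cres_dvd: fixes N :: int shows "N dvd (cres u N - u)"
proof -
  have "cres u N - u = (u + N div 2) mod N - (u + N div 2)" by (simp add: cres_def)
  also have "\<dots> = - (N * ((u + N div 2) div N))"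
    using mult_div_mod_eq[of N "u + N div 2"] by linarith
  finally show ?thesis by simp
qed

lemma count_bound:
  fixes N r :: int and M t :: nat
  assumes N: "N = 2 ^ M" and r: "0 < r" and t: "0 < t"
  shows "card {j\<in>{0..<N}. 2 ^ (t - 1) \<le> \<bar>cres (r * j) N\<bar> \<and> \<bar>cres (r * j) N\<bar> < 2 ^ t} \<le> 2 ^ t"
proof -
  define n :: int where "n = 2 ^ (t - 1)"
  have n2: "(2::int) ^ t = 2 * n" using t unfolding n_def by (cases t) auto
  define c where "c j = cres (r * j) N" for j
  define d where "d = gcd r N"
  have Npos: "0 < N" using N by simp
  have dpos: "0 < d" using r by (simp add: d_def)
  define K where "K = N div d"
  have NdK: "N = d * K" by (simp add: K_def d_def)
  define r' where "r' = r div d"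
  have rdr: "r = d * r'" by (simp add: r'_def d_def)
  have cop: "coprime r' K" unfolding r'_def K_def d_def
    using div_gcd_coprime[of r N] r by simp
  have Kpos: "0 < K" using NdK Npos dpos by (simp add: zero_less_mult_iff)
  have dvdc: "d dvd c j" for j
  proof -
    have "N dvd (c j - r * j)" by (simp add: c_def cres_dvd)
    moreover have "d dvd N" "d dvd r * j" by (auto simp: d_def)
    ultimately have "d dvd (c j - r * j)" "d dvd r * j" using dvd_trans by blast+
    then have "d dvd (c j - r * j) + r * j" by (rule dvd_add)
    then show ?thesis by simp
  qed
  define F where "F a = {j\<in>{0..<N}. c j = a}" for a
  have fib: "card (F a) \<le> nat d" for a
  proof (cases "F a = {}")
    case True then show ?thesis by simp
  next
    case False
    then obtain j0 where j0: "j0 \<in> F a" by auto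
    have modeq: "j mod K = j0 mod K" if "j \<in> F a" for j
    proof -
      have "c j = c j0" using that j0 by (simp add: F_def)
      have "N dvd (c j - r*j)" "N dvd (c j0 - r*j0)" by (simp_all add: c_def cres_dvd)
      then have "N dvd (c j - r*j) - (c j0 - r*j0)" by (rule dvd_diff)
      moreover have "(c j - r*j) - (c j0 - r*j0) = - (r * (j - j0))"
        using \<open>c j = c j0\<close> by (simp add: algebra_simps)
      ultimately have "N dvd r * (j - j0)" by simp
      then have "d * K dvd d * (r' * (j - j0))" by (simp only: NdK rdr mult.assoc)
      then have "K dvd r' * (j - j0)" using dpos by (simp only: dvd_mult_cancel_left) simp
      moreover have "coprime K r'" using cop by (simp add: coprime_commute)
      ultimately have "K dvd (j - j0)" using coprime_dvd_mult_right_iff by blast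
      then show ?thesis by (simp add: mod_eq_dvd_iff)
    qed
    have inj: "inj_on (\<lambda>j. j div K) (F a)"
    proof (rule inj_onI)
      fix x y assume xy: "x \<in> F a" "y \<in> F a" "x div K = y div K"
      have "x mod K = y mod K" using modeq xy by simp
      have "x = K * (x div K) + x mod K" by (rule mult_div_mod_eq[symmetric])
      also have "\<dots> = K * (y div K) + y mod K" using xy(3) \<open>x mod K = y mod K\<close> by (simp only:)
      also have "\<dots> = y" by (rule mult_div_mod_eq)
      finally show "x = y" .
    qed
    have img: "(\<lambda>j. j div K) ` F a \<subseteq> {0..<d}"
    proof
      fix y assume "y \<in> (\<lambda>j. j div K) ` F a"
      then obtain j where j: "j \<in> F a" "y = j div K" by auto
      have "0 \<le> j" "j < K * d" using j NdK by (auto simp: F_def mult.commute)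
      have "j div K < d"
      proof (rule ccontr)
        assume "\<not> j div K < d"
        then have "K * d \<le> K * (j div K)" using Kpos by (intro mult_left_mono) auto
        moreover have "K * (j div K) + j mod K = j" by (rule mult_div_mod_eq)
        moreover have "0 \<le> j mod K" using Kpos by simp
        ultimately show False using \<open>j < K * d\<close> by linarith
      qed
      moreover have "0 \<le> j div K" using \<open>0 \<le> j\<close> Kpos by (simp add: pos_imp_zdiv_nonneg_iff)
      ultimately show "y \<in> {0..<d}" using j by auto
    qed
    have "card (F a) = card ((\<lambda>j. j div K) ` F a)" using inj by (simp add: card_image)
    also have "\<dots> \<le> card {0..<d}" by (rule card_mono) (use img in auto)
    finally show ?thesis by simp
  qed
  define P where "P = {a. n \<le> a \<and> a < 2 * n \<and> d dvd a}"
  define A where "A = P \<union> uminus ` P"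
  have finP: "finite P" unfolding P_def by (rule finite_subset[of _ "{n..<2*n}"]) auto
  have finA: "finite A" using finP by (simp add: A_def)
  have dpow: "\<exists>e. d = 2 ^ e"
  proof -
    have "int (nat d) dvd int (2 ^ M)" using dpos N by (simp add: d_def)
    then have "nat d dvd 2 ^ M" by (simp only: of_nat_dvd_iff)
    then obtain e where "nat d = 2 ^ e" using divides_primepow_nat[of 2 "nat d" M] by auto
    then have "int (nat d) = 2 ^ e" by simp
    then have "d = 2 ^ e" using dpos by simp
    then show ?thesis ..
  qed
  then obtain e where e: "d = 2 ^ e" by auto
  have cardP: "int (card P) * d \<le> n"
  proof (cases "e \<le> t - 1")
    case True
    have ddn: "d dvd n" unfolding e n_def using True by (simp add: le_imp_power_dvd)
    then obtain k where k: "n = d * k" by auto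
    have "P \<subseteq> (\<lambda>q. d * q) ` {k..<2 * k}"
    proof
      fix a assume "a \<in> P"
      then have a: "n \<le> a" "a < 2*n" "d dvd a" by (auto simp: P_def)
      then obtain q where q: "a = d * q" by auto
      have "d * k \<le> d * q" "d * q < d * (2 * k)" using a q k by (auto simp: algebra_simps)
      then have "k \<le> q" "q < 2 * k" using dpos by auto
      then show "a \<in> (\<lambda>q. d * q) ` {k..<2 * k}" using q by auto
    qed
    then have "card P \<le> card ((\<lambda>q. d * q) ` {k..<2 * k})" by (rule card_mono[rotated]) auto
    also have "\<dots> \<le> card {k..<2 * k}" by (rule card_image_le) auto
    finally have cPk: "card P \<le> nat k" by simp
    have "0 < n" by (simp add: n_def)
    then have "0 \<le> k" using k dpos by (simp add: zero_less_mult_iff)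
    then have "int (card P) \<le> k" using cPk le_nat_iff by blast
    then have "int (card P) * d \<le> k * d" using dpos by (intro mult_right_mono) auto
    then show ?thesis using k by (simp add: mult.commute)
  next
    case False
    then have "t \<le> e" by simp
    then have "(2::int) ^ t \<le> 2 ^ e" by (rule power_increasing) simp
    then have "2 * n \<le> d" using n2 e by simp
    then have "P = {}" unfolding P_def using dpos
      by (auto dest: zdvd_imp_le)
    then show ?thesis using n_def by simp
  qed
  have cardA: "card A \<le> 2 * card P"
  proof -
    have "card A \<le> card P + card (uminus ` P)" unfolding A_def by (rule card_Un_le)
    also have "card (uminus ` P) \<le> card P" by (rule card_image_le[OF finP])
    finally show ?thesis by simp
  qed
  let ?S = "{j\<in>{0..<N}. 2 ^ (t - 1) \<le> \<bar>cres (r * j) N\<bar> \<and> \<bar>cres (r * j) N\<bar> < 2 ^ t}"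
  have Ssub: "?S \<subseteq> (\<Union>a\<in>A. F a)"
  proof
    fix j assume j: "j \<in> ?S"
    let ?a = "c j"
    have "?a \<in> A"
    proof (cases "0 \<le> ?a")
      case True then show ?thesis using j dvdc[of j] n2 by (auto simp: A_def P_def c_def n_def)
    next
      case False
      then have "- ?a \<in> P" using j dvdc[of j] n2 by (auto simp: P_def c_def n_def)
      then show ?thesis unfolding A_def by (metis UnI2 image_eqI minus_minus)
    qed
    then show "j \<in> (\<Union>a\<in>A. F a)" using j by (auto simp: F_def c_def)
  qed
  have "card ?S \<le> card (\<Union>a\<in>A. F a)"
  proof (rule card_mono[OF _ Ssub])
    have "finite (F a)" for a unfolding F_def by (rule finite_subset[of _ "{0..<N}"]) auto
    then show "finite (\<Union>a\<in>A. F a)" using finA by blast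
  qed
  also have "\<dots> \<le> (\<Sum>a\<in>A. card (F a))" by (rule card_UN_le[OF finA])
  also have "\<dots> \<le> (\<Sum>a\<in>A. nat d)" by (rule sum_mono) (rule fib)
  also have "\<dots> = card A * nat d" by simp
  finally have cS: "card ?S \<le> card A * nat d" .
  have "int (card ?S) \<le> int (card A * nat d)" using cS by (simp only: of_nat_le_iff)
  also have "\<dots> = int (card A) * d" using dpos by simp
  also have "\<dots> \<le> int (2 * card P) * d" using cardA dpos
    by (intro mult_right_mono) auto
  also have "\<dots> = 2 * (int (card P) * d)" by simp
  also have "\<dots> \<le> 2 * n" using cardP by simp
  finally have "int (card ?S) \<le> int (2 ^ t)" using n2 by simp
  then show ?thesis by (simp only: of_nat_le_iff)
qed

lemma jordan_ineq:
  fixes x :: real assumes "0 \<le> x" "x \<le> pi/2"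
  shows "2 * x / pi \<le> sin x"
proof -
  have cvx: "convex_on {0..pi} (\<lambda>x. - sin x)"
    by (rule f''_ge0_imp_convex[where f'="\<lambda>x. - cos x" and f''="\<lambda>x. sin x"])
       (auto intro!: derivative_eq_intros sin_ge_zero)
  define u where "u = 2 * x / pi"
  have u: "0 \<le> u" "u \<le> 1" using assms pi_gt_zero by (auto simp: u_def field_simps)
  have "- sin ((1 - u) *\<^sub>R 0 + u *\<^sub>R (pi/2)) \<le> (1 - u) * (- sin 0) + u * (- sin (pi/2))"
    by (rule convex_onD[OF cvx]) (use u pi_gt_zero in auto)
  moreover have "(1 - u) *\<^sub>R 0 + u *\<^sub>R (pi/2) = x" by (simp add: u_def)
  ultimately show ?thesis by (simp add: u_def)
qed

lemma abs_jordan: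
  fixes x :: real assumes "\<bar>x\<bar> \<le> pi/2"
  shows "2 * \<bar>x\<bar> / pi \<le> \<bar>sin x\<bar>"
proof (cases "0 \<le> x")
  case True then show ?thesis using jordan_ineq[of x] assms
    by (smt (verit))
next
  case False then show ?thesis using jordan_ineq[of "-x"] assms
    by auto
qed

lemma norm_one_minus_cis: "cmod (1 - cis th) = 2 * \<bar>sin (th/2)\<bar>"
proof -
  have "(cmod (1 - cis th))^2 = (1 - cos th)^2 + (sin th)^2"
    by (simp add: cmod_def cis.sel)
  also have "\<dots> = 2 - 2 * cos th" using sin_cos_squared_add[of th] by (simp add: power2_eq_square algebra_simps)
  also have "\<dots> = 4 * (sin (th/2))^2" using cos_double_sin[of "th/2"] by simp
  also have "\<dots> = (2 * \<bar>sin (th/2)\<bar>)^2" by (simp add: power2_eq_square)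
  finally have "(cmod (1 - cis th))^2 = (2 * \<bar>sin (th/2)\<bar>)^2" .
  then show ?thesis by (metis power2_eq_iff_nonneg norm_ge_zero abs_ge_zero mult_nonneg_nonneg zero_le_numeral)
qed

lemma geom_bound:
  assumes "sin (th/2) \<noteq> 0"
  shows "cmod (\<Sum>b<n. cis (th * real b)) \<le> 1 / \<bar>sin (th/2)\<bar>"
proof -
  have ne: "cis th \<noteq> 1"
  proof
    assume "cis th = 1"
    then have "cmod (1 - cis th) = 0" by simp
    with norm_one_minus_cis[of th] assms show False by simp
  qed
  have "(\<Sum>b<n. cis (th * real b)) = (\<Sum>b<n. cis th ^ b)"
    by (intro sum.cong refl) (simp add: Complex.DeMoivre mult.commute)
  also have "\<dots> = (1 - cis th ^ n) / (1 - cis th)" using ne by (simp add: sum_gp_strict)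
  finally have eq: "(\<Sum>b<n. cis (th * real b)) = (1 - cis th ^ n) / (1 - cis th)" .
  have num: "cmod (1 - cis th ^ n) \<le> 2"
    using norm_triangle_ineq4[of 1 "cis th ^ n"] by (simp add: norm_power)
  have "cmod (\<Sum>b<n. cis (th * real b)) = cmod (1 - cis th ^ n) / (2 * \<bar>sin (th/2)\<bar>)"
    by (simp add: eq norm_divide norm_one_minus_cis)
  also have "\<dots> \<le> 2 / (2 * \<bar>sin (th/2)\<bar>)"
    using num assms by (intro divide_right_mono) auto
  finally show ?thesis by simp
qed


lemma freq_bound_a:
  fixes m l t :: nat and r j :: int
  assumes r: "0 < r" and t: "0 < t"
    and a: "2 ^ (t - 1) \<le> \<bar>alpha_r m l r j\<bar>" and ml: "0 < m + l"
  shows "freq_prob m l r j \<le> real_of_int r / (2 ^ t)^2"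
proof -
  define N :: int where "N = 2 ^ (m + l)"
  define a where "a = alpha_r m l r j"
  define \<beta> where "\<beta> = N mod r"
  define L where "L = nat (N div r)"
  define th where "th = 2 * pi * real_of_int a / real_of_int N"
  have Npos: "0 < N" by (simp add: N_def)
  have Nev: "even N" using ml by (simp add: N_def)
  have Nr: "real_of_int N = 2 * real_of_int (N div 2)" using Nev by (metis dvd_mult_div_cancel of_int_mult of_int_numeral)
  have arange: "- (N div 2) \<le> a" "a < N div 2"
    using cres_range[OF Npos Nev] by (auto simp: a_def alpha_r_def N_def)
  have aabs: "\<bar>real_of_int a\<bar> \<le> real_of_int N / 2" using arange Nr by linarith
  have apos: "2 ^ (t - 1) \<le> \<bar>real_of_int a\<bar>" using a unfolding a_def
    by (metis of_int_abs of_int_le_iff of_int_numeral of_int_power)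
  have t2: "(2::real) ^ t = 2 * 2 ^ (t - 1)" using t by (cases t) auto
  have half: "th / 2 = pi * real_of_int a / real_of_int N" by (simp add: th_def)
  have habs: "\<bar>th / 2\<bar> = pi * \<bar>real_of_int a\<bar> / real_of_int N"
    using Npos by (simp add: half abs_mult abs_divide)
  have "\<bar>th/2\<bar> \<le> pi * (real_of_int N / 2) / real_of_int N"
    unfolding habs using aabs Npos by (intro divide_right_mono mult_left_mono) auto
  also have "\<dots> = pi / 2" using Npos by simp
  finally have "\<bar>th/2\<bar> \<le> pi/2" .
  then have sinb: "2 * \<bar>th/2\<bar> / pi \<le> \<bar>sin (th/2)\<bar>" by (rule abs_jordan)
  have "2 * \<bar>th/2\<bar> / pi = 2 * \<bar>real_of_int a\<bar> / real_of_int N" unfolding habs by simp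
  with sinb have sinb2: "2 * \<bar>real_of_int a\<bar> / real_of_int N \<le> \<bar>sin (th/2)\<bar>" by simp
  have "(0::real) < 2 ^ (t - 1)" by simp
  then have "0 < \<bar>real_of_int a\<bar>" using apos by linarith
  then have "0 < 2 * \<bar>real_of_int a\<bar> / real_of_int N"
    using Npos by (intro divide_pos_pos) auto
  then have sinpos: "0 < \<bar>sin (th/2)\<bar>" using sinb2 by linarith
  have X: "(cmod (\<Sum>b<k. cis (th * real b)))\<^sup>2 \<le> (real_of_int N / 2 ^ t)^2" for k
  proof -
    have "cmod (\<Sum>b<k. cis (th * real b)) \<le> 1 / \<bar>sin (th/2)\<bar>"
      using sinpos by (intro geom_bound) auto
    also have "\<dots> \<le> 1 / (2 * \<bar>real_of_int a\<bar> / real_of_int N)"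
    proof -
      have q: "0 < \<bar>sin (th/2)\<bar> * (2 * \<bar>real_of_int a\<bar> / real_of_int N)"
        using sinpos \<open>0 < 2 * \<bar>real_of_int a\<bar> / real_of_int N\<close> by (rule mult_pos_pos)
      show ?thesis by (rule divide_left_mono[OF sinb2 _ q]) simp
    qed
    also have "\<dots> = real_of_int N / (2 * \<bar>real_of_int a\<bar>)" by simp
    also have "\<dots> \<le> real_of_int N / (2 * 2 ^ (t - 1))"
      using apos Npos \<open>0 < \<bar>real_of_int a\<bar>\<close>
      by (intro divide_left_mono mult_left_mono mult_pos_pos) auto
    also have "\<dots> = real_of_int N / 2 ^ t" using t2 by simp
    finally show ?thesis by (intro power_mono) auto
  qed
  have bnd: "0 \<le> \<beta>" "\<beta> < r" using r by (auto simp: \<beta>_def)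
  have "freq_prob m l r j = real_of_int \<beta> / real_of_int N ^ 2 * (cmod (\<Sum>b<Suc L. cis (th * real b)))\<^sup>2
        + real_of_int (r - \<beta>) / real_of_int N ^ 2 * (cmod (\<Sum>b<L. cis (th * real b)))\<^sup>2"
    unfolding freq_prob_def Let_def N_def[symmetric] \<beta>_def[symmetric] L_def[symmetric]
      a_def[symmetric] th_def[symmetric] lessThan_Suc_atMost ..
  also have "\<dots> \<le> real_of_int \<beta> / real_of_int N ^ 2 * (real_of_int N / 2 ^ t)^2
        + real_of_int (r - \<beta>) / real_of_int N ^ 2 * (real_of_int N / 2 ^ t)^2"
    using bnd by (intro add_mono mult_left_mono X) auto
  also have "\<dots> = real_of_int r / (2 ^ t)^2" using Npos
    by (simp add: field_simps power2_eq_square)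
  finally show ?thesis .
qed


lemma freq_bound_b:
  fixes m l :: nat and r j :: int
  assumes r: "0 < r" and r2: "2 * r \<le> 2 ^ (m + l)"
  shows "freq_prob m l r j \<le> 9 / (4 * real_of_int r)"
proof -
  define N :: int where "N = 2 ^ (m + l)"
  define \<beta> where "\<beta> = N mod r"
  define L where "L = nat (N div r)"
  define th where "th = 2 * pi * real_of_int (alpha_r m l r j) / real_of_int N"
  have Npos: "0 < N" by (simp add: N_def)
  have bnd: "0 \<le> \<beta>" "\<beta> < r" using r by (auto simp: \<beta>_def)
  have S: "cmod (\<Sum>b<k. cis (th * real b)) \<le> real k" for k
    using norm_sum[of "\<lambda>b. cis (th * real b)" "{..<k}"] by simp
  have Ldef: "int L = N div r" using Npos r by (simp add: L_def pos_imp_zdiv_nonneg_iff)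
  have "r * (N div r) \<le> N" using r mult_div_mod_eq[of r N] pos_mod_sign[OF r, of N] by linarith
  then have rL: "r * int L + r \<le> N + r" using Ldef by simp
  have Y: "2 * (real_of_int r * (real L + 1)) \<le> 3 * real_of_int N"
  proof -
    have "2 * (r * (int L + 1)) \<le> 3 * N" using rL r2 by (simp add: N_def algebra_simps)
    then have "real_of_int (2 * (r * (int L + 1))) \<le> real_of_int (3 * N)" by (simp only: of_int_le_iff)
    then show ?thesis by simp
  qed
  have Yp: "0 \<le> 2 * (real_of_int r * (real L + 1))" using r by simp
  have sq: "(2 * (real_of_int r * (real L + 1)))^2 \<le> (3 * real_of_int N)^2"
    using Y Yp by (rule power_mono)
  have "freq_prob m l r j = real_of_int \<beta> / real_of_int N ^ 2 * (cmod (\<Sum>b<Suc L. cis (th * real b)))\<^sup>2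
        + real_of_int (r - \<beta>) / real_of_int N ^ 2 * (cmod (\<Sum>b<L. cis (th * real b)))\<^sup>2"
    unfolding freq_prob_def Let_def N_def[symmetric] \<beta>_def[symmetric] L_def[symmetric]
      th_def[symmetric] lessThan_Suc_atMost ..
  also have "\<dots> \<le> real_of_int \<beta> / real_of_int N ^ 2 * (real L + 1)^2
        + real_of_int (r - \<beta>) / real_of_int N ^ 2 * (real L + 1)^2"
    using bnd S[of "Suc L"] S[of L] by (intro add_mono mult_left_mono power_mono) auto
  also have "\<dots> = real_of_int r * (real L + 1)^2 / real_of_int N ^ 2"
    using Npos by (simp add: field_simps)
  also have "\<dots> \<le> 9 / (4 * real_of_int r)"
    using sq r Npos by (simp add: field_simps power2_eq_square)
  finally show ?thesis .
qed


lemma rho_le: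
  fixes m l t :: nat and r :: int and B :: real
  assumes r: "0 < r" and t: "0 < t" and B: "0 \<le> B"
    and fb: "\<And>j. 2 ^ (t - 1) \<le> \<bar>alpha_r m l r j\<bar> \<Longrightarrow> freq_prob m l r j \<le> B"
  shows "rho m l r t \<le> 2 ^ t * B"
proof -
  let ?S = "{j\<in>{0..<(2::int) ^ (m + l)}. 2 ^ (t - 1) \<le> \<bar>alpha_r m l r j\<bar> \<and> \<bar>alpha_r m l r j\<bar> < 2 ^ t}"
  have c: "card ?S \<le> 2 ^ t"
    using count_bound[of "2 ^ (m + l)" "m + l" r t] r t by (simp add: alpha_r_def)
  have "rho m l r t \<le> of_nat (card ?S) * B"
    unfolding rho_def by (rule sum_bounded_above) (use fb in auto)
  also have "\<dots> \<le> 2 ^ t * B" using c B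
    by (intro mult_right_mono) (auto simp: of_nat_le_iff[symmetric])
  finally show ?thesis .
qed

theorem mainTheorem16:
  fixes m l :: nat and r :: int
  assumes "0 < m" and "0 < l"
  shows "(2 \<le> r \<and> r < 2 ^ m \<longrightarrow>
            (\<forall>t::nat. 0 < t \<longrightarrow> rho m l r t \<le> 2 powr (real m - real t)))
       \<and> (2 ^ (m - 1) \<le> r \<and> r < 2 ^ m \<and> 2 \<le> r \<longrightarrow>
            (\<forall>t::nat. 0 < t \<longrightarrow>
               rho m l r t \<le> min (2 powr (real m - real t)) (2 powr (real t + 3 - real m))))"
proof -
  have A: "rho m l r t \<le> 2 powr (real m - real t)" if r: "2 \<le> r" "r < 2 ^ m" and t: "0 < t" for t
  proof -
    have rp: "0 < r" using r by simp
    have "rho m l r t \<le> 2 ^ t * (real_of_int r / (2 ^ t)^2)"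
      using assms rp by (intro rho_le rp t freq_bound_a) auto
    also have "\<dots> = real_of_int r / 2 ^ t" by (simp add: power2_eq_square)
    also have "\<dots> \<le> 2 ^ m / 2 ^ t"
    proof -
      have "real_of_int r \<le> real_of_int (2 ^ m)" using r by simp
      then show ?thesis by (intro divide_right_mono) auto
    qed
    also have "\<dots> = 2 powr (real m - real t)" by (simp add: powr_diff powr_realpow)
    finally show ?thesis .
  qed
  have B: "rho m l r t \<le> 2 powr (real t + 3 - real m)"
    if r: "2 ^ (m - 1) \<le> r" "r < 2 ^ m" "2 \<le> r" and t: "0 < t" for t
  proof -
    have rp: "0 < r" using r by simp
    have "(2::int) ^ m * 2 \<le> 2 ^ (m + l)"
    proof -
      have "Suc m \<le> m + l" using assms by simp
      then have "(2::int) ^ Suc m \<le> 2 ^ (m + l)" by (rule power_increasing) simp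
      then show ?thesis by (simp add: mult.commute)
    qed
    then have r2: "2 * r \<le> 2 ^ (m + l)" using r by linarith
    have "rho m l r t \<le> 2 ^ t * (9 / (4 * real_of_int r))"
      using rp t by (intro rho_le freq_bound_b r2) auto
    also have "\<dots> \<le> 2 ^ t * (9 / (4 * 2 ^ (m - 1)))"
    proof -
      have "real_of_int (2 ^ (m - 1)) \<le> real_of_int r" using r by (simp only: of_int_le_iff)
      then have "(2::real) ^ (m - 1) \<le> real_of_int r" by simp
      then have "9 / (4 * real_of_int r) \<le> 9 / (4 * 2 ^ (m - 1))"
        by (intro frac_le) auto
      then show ?thesis by (intro mult_left_mono) auto
    qed
    also have "\<dots> \<le> 2 ^ t * 8 / 2 ^ m"
    proof -
      have "(2::real) ^ m = 2 * 2 ^ (m - 1)" using assms by (cases m) auto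
      then show ?thesis by (simp add: field_simps)
    qed
    also have "\<dots> = 2 powr (real t + 3 - real m)"
      by (simp add: powr_diff powr_add powr_realpow)
    finally show ?thesis .
  qed
  show ?thesis using A B by auto
qed

end
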